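(* Consider the adaptive experiment described in the context, with truncated propensities $\pi_t(a\mid X_t,\Omega_{t-1})\in[1/k_t,1-1/k_t]$. Assume: $\mathrm{Var}(Y_t)<\infty$; $v(a,x)<\infty$ for all $a\in\{0,1\}$, $x\in\mathcal{X}$; $k_t\lVert\hat f_t-f\rVert_2=o_{\mathbb{P}}(1)$; $k_t\lVert\pi_t-\pi\rVert_2=o_{\mathbb{P}}(1)$ for some policy $\pi$ with $1/\pi(a\mid x)<\infty$; $1/\pi^{\mathrm{AIPW}}<C_1$ for some constant $C_1<\infty$; and $\mathrm{Var}(\hat f_{t-1}(a,X_t))<\infty$ for $a\in\{0,1\}$. Then, as $t\to\infty$, $$2\, \mathbb{E} \left[ \left(f(1,X_t) - f(0,X_t) - \hat{f}_{t-1}(1,X_t) + \hat{f}_{t-1}(0,X_t) \right) \left(\hat{f}_{t-1}(1,X_t) - \hat{f}_{t-1}(0,X_t) -\theta_0 \right) ~\Big|~\Omega_{t-1}\right]= o_{\mathbb{P}}(1).$$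
   Context: Data-generating process: subjects $t=1,2,\dots$ arrive sequentially. The tuples $(X_t, Y_t(0), Y_t(1))$, $X_t\in\mathcal{X}$, are i.i.d. over $t$. Let $\Omega_{t-1}=\{(X_s,A_s,Y_s): s\le t-1\}$ be the history. Given $X_t$ and $\Omega_{t-1}$, the treatment $A_t\in\{0,1\}$ is drawn with $\mathbb{P}(A_t=1\mid X_t,\Omega_{t-1})=\pi_t(1\mid X_t,\Omega_{t-1})$, independently of the current potential outcomes; $Y_t = \mathbb{1}[A_t=0]Y_t(0)+\mathbb{1}[A_t=1]Y_t(1)$. The policies are $\pi_t=(\tilde\pi_t\vee 1/k_t)\wedge(1-1/k_t)$ for arbitrary $(0,1)$-valued policies $\tilde\pi_t$ and user-chosen $k_t\in[2,\infty)$. $f(a,x)=\mathbb{E}[Y_t(a)\mid X_t=x]$, $v(a,x)=\mathrm{Var}(Y_t(a)\mid X_t=x)$, $\theta_0=\mathbb{E}[Y(1)-Y(0)]$; $\hat f_t$ is an estimator of $f$ built from $\Omega_t$; $\lVert g\rVert_2^2=\int g(x)^2d\mathbb{P}(x)$. $\pi^{\mathrm{AIPW}}(1\mid x)=\frac{\sqrt{v(1,x)}}{\sqrt{v(1,x)}+\sqrt{v(0,x)}}$, $\pi^{\mathrm{AIPW}}(0\mid x)=1-\pi^{\mathrm{AIPW}}(1\mid x)$. *)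

theory Defs
  imports "HOL-Probability.Probability"
begin

definition preimgs :: "'a measure \<Rightarrow> 'b measure \<Rightarrow> ('a \<Rightarrow> 'b) \<Rightarrow> 'a set set" where
  "preimgs M N g = {g -` B \<inter> space M | B. B \<in> sets N}"

definition ypot :: "(nat \<Rightarrow> 'a \<Rightarrow> real) \<Rightarrow> (nat \<Rightarrow> 'a \<Rightarrow> real) \<Rightarrow> bool \<Rightarrow> nat \<Rightarrow> 'a \<Rightarrow> real" where
  "ypot Y0 Y1 a t \<omega> = (if a then Y1 t \<omega> else Y0 t \<omega>)"

definition yobs :: "(nat \<Rightarrow> 'a \<Rightarrow> bool) \<Rightarrow> (nat \<Rightarrow> 'a \<Rightarrow> real) \<Rightarrow> (nat \<Rightarrow> 'a \<Rightarrow> real) \<Rightarrow> nat \<Rightarrow> 'a \<Rightarrow> real" where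
  "yobs A Y0 Y1 t \<omega> = (if A t \<omega> then Y1 t \<omega> else Y0 t \<omega>)"

text \<open>History sigma-algebra Omega_t generated by (X_s, A_s, Y_s), 1 <= s <= t
  (subjects are indexed from 1; Omega_0 is trivial).\<close>
definition hist :: "'a measure \<Rightarrow> 'x measure \<Rightarrow> (nat \<Rightarrow> 'a \<Rightarrow> 'x) \<Rightarrow> (nat \<Rightarrow> 'a \<Rightarrow> bool)
    \<Rightarrow> (nat \<Rightarrow> 'a \<Rightarrow> real) \<Rightarrow> (nat \<Rightarrow> 'a \<Rightarrow> real) \<Rightarrow> nat \<Rightarrow> 'a measure" where
  "hist M MX X A Y0 Y1 t = sigma (space M)
     (\<Union>s\<in>{1..t}. preimgs M MX (X s) \<union> preimgs M (count_space UNIV) (A s)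
                 \<union> preimgs M borel (yobs A Y0 Y1 s))"

definition propalg :: "'a measure \<Rightarrow> 'x measure \<Rightarrow> (nat \<Rightarrow> 'a \<Rightarrow> 'x) \<Rightarrow> (nat \<Rightarrow> 'a \<Rightarrow> bool)
    \<Rightarrow> (nat \<Rightarrow> 'a \<Rightarrow> real) \<Rightarrow> (nat \<Rightarrow> 'a \<Rightarrow> real) \<Rightarrow> nat \<Rightarrow> 'a measure" where
  "propalg M MX X A Y0 Y1 t = sigma (space M)
     (sets (hist M MX X A Y0 Y1 (t - 1)) \<union> preimgs M MX (X t)
       \<union> preimgs M borel (Y0 t) \<union> preimgs M borel (Y1 t))"

definition trunc :: "real \<Rightarrow> real \<Rightarrow> real" where
  "trunc k p = min (max p (1 / k)) (1 - 1 / k)"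

definition l2norm :: "'x measure \<Rightarrow> ('x \<Rightarrow> real) \<Rightarrow> real" where
  "l2norm P g = sqrt (integral\<^sup>L P (\<lambda>x. (g x)\<^sup>2))"

definition conv_in_prob :: "'a measure \<Rightarrow> (nat \<Rightarrow> 'a \<Rightarrow> real) \<Rightarrow> bool" where
  "conv_in_prob M Z \<longleftrightarrow> (\<forall>t. Z t \<in> borel_measurable M) \<and>
     (\<forall>e>0. (\<lambda>t. measure M {\<omega> \<in> space M. e < \<bar>Z t \<omega>\<bar>}) \<longlonglongrightarrow> 0)"

definition aipw :: "(bool \<Rightarrow> 'x \<Rightarrow> real) \<Rightarrow> bool \<Rightarrow> 'x \<Rightarrow> real" where
  "aipw v a x = (if a then sqrt (v True x) / (sqrt (v True x) + sqrt (v False x))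
                 else 1 - sqrt (v True x) / (sqrt (v True x) + sqrt (v False x)))"

end

theory Submission
  imports Defs
begin



lemma (in prob_space) indep_var_of_set:
  assumes "random_variable S X" "random_variable T Y"
    and "indep_set {X -` A \<inter> space M | A. A \<in> sets S} {Y -` A \<inter> space M | A. A \<in> sets T}"
  shows "indep_var S X T Y"
proof -
  have eq: "(\<lambda>i. {case_bool X Y i -` A \<inter> space M |A. A \<in> sets (case_bool S T i)})
      = case_bool {X -` A \<inter> space M | A. A \<in> sets S} {Y -` A \<inter> space M | A. A \<in> sets T}"
    by (rule ext) (auto split: bool.split)
  show ?thesis
    unfolding indep_var_def indep_vars_def2 eq using assms
    by (auto simp: indep_set_def split: bool.split)
qed

lemma (in prob_space) freeze:
  assumes H: "subalgebra M H" and Z[measurable]: "Z \<in> M \<rightarrow>\<^sub>M N"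
   and ind: "indep_set (sets H) {Z -` B \<inter> space M | B. B \<in> sets N}"
   and g[measurable]: "(\<lambda>(\<omega>,x). g \<omega> x) \<in> borel_measurable (H \<Otimes>\<^sub>M N)"
   and int: "integrable M (\<lambda>\<omega>. g \<omega> (Z \<omega>))"
  shows "AE \<omega> in M. real_cond_exp M H (\<lambda>\<omega>. g \<omega> (Z \<omega>)) \<omega> = (\<integral>x. g \<omega> x \<partial>distr M N Z)"
    and "AE \<omega> in M. integrable (distr M N Z) (g \<omega>)"
proof -
  have idm: "(\<lambda>\<omega>. \<omega>) \<in> M \<rightarrow>\<^sub>M H"
  proof (rule measurableI)
    fix x assume "x \<in> space M" thus "x \<in> space H" using H by (simp add: subalgebra_def)
  next
    fix A assume A: "A \<in> sets H"
    then have "A \<subseteq> space M" using H sets.sets_into_space[of A H] by (simp add: subalgebra_def)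
    thus "(\<lambda>\<omega>. \<omega>) -` A \<inter> space M \<in> sets M" using A H by (auto simp: subalgebra_def Int_absorb2)
  qed
  let ?PH = "distr M H (\<lambda>\<omega>. \<omega>)" and ?PN = "distr M N Z"
  interpret PH: prob_space ?PH by (rule prob_space_distr[OF idm])
  interpret PN: prob_space ?PN by (rule prob_space_distr[OF Z])
  have pm: "(\<lambda>\<omega>. (\<omega>, Z \<omega>)) \<in> M \<rightarrow>\<^sub>M H \<Otimes>\<^sub>M N" by (rule measurable_Pair[OF idm Z])
  have joint: "?PH \<Otimes>\<^sub>M ?PN = distr M (H \<Otimes>\<^sub>M N) (\<lambda>\<omega>. (\<omega>, Z \<omega>))"
  proof (rule pair_measure_eqI)
    show "sigma_finite_measure ?PH" "sigma_finite_measure ?PN"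
      by (simp_all add: PH.sigma_finite_measure_axioms PN.sigma_finite_measure_axioms)
    have "sets (?PH \<Otimes>\<^sub>M ?PN) = sets (H \<Otimes>\<^sub>M N)" by (rule sets_pair_measure_cong) simp_all
    then show "sets (?PH \<Otimes>\<^sub>M ?PN) = sets (distr M (H \<Otimes>\<^sub>M N) (\<lambda>\<omega>. (\<omega>, Z \<omega>)))" by simp
  next
    fix A B assume A0: "A \<in> sets ?PH" and B0: "B \<in> sets ?PN"
    then have A: "A \<in> sets H" and B: "B \<in> sets N" by simp_all
    have AM: "A \<in> sets M" and As: "A \<subseteq> space M"
      using A H sets.sets_into_space[OF A] by (auto simp: subalgebra_def)
    have ZB: "Z -` B \<inter> space M \<in> sets M" using Z B by (rule measurable_sets)
    have e1: "emeasure ?PH A = emeasure M A"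
      using As by (simp add: emeasure_distr[OF idm A] Int_absorb2)
    have e2: "emeasure ?PN B = emeasure M (Z -` B \<inter> space M)"
      by (simp add: emeasure_distr[OF Z B])
    have AB: "A \<times> B \<in> sets (H \<Otimes>\<^sub>M N)" using A B by (rule pair_measureI)
    have "(\<lambda>\<omega>. (\<omega>, Z \<omega>)) -` (A \<times> B) \<inter> space M = A \<inter> (Z -` B \<inter> space M)"
      using As by auto
    then have e3: "emeasure (distr M (H \<Otimes>\<^sub>M N) (\<lambda>\<omega>. (\<omega>, Z \<omega>))) (A \<times> B) = emeasure M (A \<inter> (Z -` B \<inter> space M))"
      by (simp add: emeasure_distr[OF pm AB])
    have "prob (A \<inter> (Z -` B \<inter> space M)) = prob A * prob (Z -` B \<inter> space M)"
      by (rule indep_setD[OF ind A]) (use B in blast)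
    then show "emeasure ?PH A * emeasure ?PN B = emeasure (distr M (H \<Otimes>\<^sub>M N) (\<lambda>\<omega>. (\<omega>, Z \<omega>))) (A \<times> B)"
      unfolding e1 e2 e3 by (simp add: emeasure_eq_measure ennreal_mult)
  qed
  interpret P: pair_sigma_finite ?PH ?PN
    by (simp add: PH.sigma_finite_measure_axioms PN.sigma_finite_measure_axioms pair_sigma_finite.intro)
  have gint: "integrable (?PH \<Otimes>\<^sub>M ?PN) (\<lambda>(\<omega>,x). g \<omega> x)"
    unfolding joint using int by (subst integrable_distr_eq[OF pm]) simp_all
  show "AE \<omega> in M. integrable ?PN (g \<omega>)"
    using AE_distrD[OF idm P.AE_integrable_fst[OF gint]] by simp
  define G where "G \<omega> = (\<integral>x. g \<omega> x \<partial>?PN)" for \<omega>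
  have Gm[measurable]: "G \<in> borel_measurable H"
    unfolding G_def by (rule PN.borel_measurable_lebesgue_integral) simp
  have GintH: "integrable ?PH G"
    unfolding G_def by (rule P.integrable_fst[OF gint])
  have Gint: "integrable M G"
    using GintH by (subst (asm) integrable_distr_eq[OF idm]) simp_all
  interpret S: sigma_finite_subalgebra M H
    by (rule sigma_finite_subalgebra.intro[OF H])
       (rule prob_space_imp_sigma_finite[OF prob_space_restr_to_subalg[OF H prob_space_axioms]])
  show "AE \<omega> in M. real_cond_exp M H (\<lambda>\<omega>. g \<omega> (Z \<omega>)) \<omega> = (\<integral>x. g \<omega> x \<partial>distr M N Z)"
    unfolding G_def[symmetric]
  proof (rule S.real_cond_exp_charact[OF _ int Gint Gm])
    fix B assume B[measurable]: "B \<in> sets H"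
    have gBint: "integrable (?PH \<Otimes>\<^sub>M ?PN) (\<lambda>(\<omega>,x). indicator B \<omega> * g \<omega> x)"
    proof -
      have i1: "integrable (?PH \<Otimes>\<^sub>M ?PN) (\<lambda>p. indicator (B \<times> space ?PN) p *\<^sub>R (case p of (\<omega>,x) \<Rightarrow> g \<omega> x))"
        by (rule integrable_mult_indicator[OF _ gint]) (rule pair_measureI, simp_all add: B)
      show ?thesis
        by (rule Bochner_Integration.integrable_cong[OF refl, THEN iffD1, OF _ i1]) (auto simp: space_pair_measure indicator_def)
    qed
    have "(\<integral>\<omega>\<in>B. g \<omega> (Z \<omega>) \<partial>M) = (\<integral>\<omega>. indicator B \<omega> * g \<omega> (Z \<omega>) \<partial>M)"
      unfolding set_lebesgue_integral_def by simp
    also have "\<dots> = (\<integral>p. (\<lambda>(\<omega>,x). indicator B \<omega> * g \<omega> x) p \<partial>distr M (H \<Otimes>\<^sub>M N) (\<lambda>\<omega>. (\<omega>, Z \<omega>)))"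
      by (subst integral_distr[OF pm]) simp_all
    also have "\<dots> = (\<integral>p. (\<lambda>(\<omega>,x). indicator B \<omega> * g \<omega> x) p \<partial>(?PH \<Otimes>\<^sub>M ?PN))"
      unfolding joint ..
    also have "\<dots> = (\<integral>\<omega>. (\<integral>x. indicator B \<omega> * g \<omega> x \<partial>?PN) \<partial>?PH)"
      using P.integral_fst[OF gBint] by simp
    also have "\<dots> = (\<integral>\<omega>. indicator B \<omega> * G \<omega> \<partial>?PH)"
      unfolding G_def by simp
    also have "\<dots> = (\<integral>\<omega>. indicator B \<omega> * G \<omega> \<partial>M)"
      by (subst integral_distr[OF idm]) simp_all
    also have "\<dots> = (\<integral>\<omega>\<in>B. G \<omega> \<partial>M)"
      unfolding set_lebesgue_integral_def by simp
    finally show "(\<integral>\<omega>\<in>B. g \<omega> (Z \<omega>) \<partial>M) = (\<integral>\<omega>\<in>B. G \<omega> \<partial>M)" .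
  qed
qed



lemma sfs_of_prob:
  assumes "prob_space M" "subalgebra M F"
  shows "sigma_finite_subalgebra M F"
  by (rule sigma_finite_subalgebra.intro[OF assms(2)])
     (rule prob_space_imp_sigma_finite[OF prob_space_restr_to_subalg[OF assms(2,1)]])

lemma sigma_subalg:
  assumes "G \<subseteq> sets M"
  shows "subalgebra M (sigma (space M) G)"
proof -
  have "G \<subseteq> Pow (space M)" using assms sets.sets_into_space by blast
  then show ?thesis using assms
    by (simp add: subalgebra_def sets_measure_of sets.sigma_sets_subset)
qed

lemma meas_gen:
  assumes "f \<in> space M \<rightarrow> space N" "{f -` B \<inter> space M | B. B \<in> sets N} \<subseteq> G" "G \<subseteq> Pow (space M)"
  shows "f \<in> measurable (sigma (space M) G) N"
proof (rule measurableI)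
  fix x assume "x \<in> space (sigma (space M) G)"
  then show "f x \<in> space N" using assms(1,3) by (auto simp: space_measure_of_conv)
next
  fix B assume "B \<in> sets N"
  then have "f -` B \<inter> space M \<in> G" using assms(2) by blast
  then show "f -` B \<inter> space (sigma (space M) G) \<in> sets (sigma (space M) G)"
    using assms(3) by (simp add: space_measure_of_conv sets_measure_of sigma_sets.Basic)
qed

lemma trunc_bounds:
  assumes "2 \<le> k"
  shows "1 / k \<le> trunc k p" "trunc k p \<le> 1 - 1 / k"
proof -
  have "1 / k \<le> 1 / 2" using assms by (intro divide_left_mono) auto
  then show "1 / k \<le> trunc k p" "trunc k p \<le> 1 - 1 / k" unfolding trunc_def by auto
qed

lemma sq4: "((a::real) + b + c + d)\<^sup>2 \<le> 4 * (a\<^sup>2 + b\<^sup>2 + c\<^sup>2 + d\<^sup>2)"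
proof -
  have "0 \<le> (a-b)\<^sup>2 + (a-c)\<^sup>2 + (a-d)\<^sup>2 + (b-c)\<^sup>2 + (b-d)\<^sup>2 + (c-d)\<^sup>2" by simp
  then show ?thesis by (simp add: power2_eq_square algebra_simps)
qed

lemma sq3: "((a::real) + b + c)\<^sup>2 \<le> 3 * (a\<^sup>2 + b\<^sup>2 + c\<^sup>2)"
proof -
  have "0 \<le> (a-b)\<^sup>2 + (a-c)\<^sup>2 + (b-c)\<^sup>2" by simp
  then show ?thesis by (simp add: power2_eq_square algebra_simps)
qed

lemma sq2: "((a::real) + b)\<^sup>2 \<le> 2 * (a\<^sup>2 + b\<^sup>2)"
proof -
  have "0 \<le> (a-b)\<^sup>2" by simp
  then show ?thesis by (simp add: power2_eq_square algebra_simps)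
qed

lemma amgm: "\<bar>(a::real) * b\<bar> \<le> (a\<^sup>2 + b\<^sup>2) / 2"
proof -
  have "0 \<le> (\<bar>a\<bar> - \<bar>b\<bar>)\<^sup>2" by simp
  then show ?thesis by (simp add: power2_eq_square algebra_simps abs_mult)
qed

lemma lin_aux:
  fixes p U W a b c d e :: real
  assumes "p \<le> (U + W) / 2" "U \<le> 4 * (a + b + c + d)" "W \<le> 3 * (c + d + e)"
    "0 \<le> a" "0 \<le> b" "0 \<le> c" "0 \<le> d" "0 \<le> e"
  shows "p \<le> 4 * (a + b + c + d) + 2 * e"
  using assms by argo

lemma crude_bound:
  fixes f1 f0 h1 h0 th :: real
  shows "\<bar>(f1 - f0 - h1 + h0) * (h1 - h0 - th)\<bar> \<le> 4 * (f1\<^sup>2 + f0\<^sup>2 + h1\<^sup>2 + h0\<^sup>2) + 2 * th\<^sup>2"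
proof -
  have a: "\<bar>(f1 - f0 - h1 + h0) * (h1 - h0 - th)\<bar> \<le> ((f1 - f0 - h1 + h0)\<^sup>2 + (h1 - h0 - th)\<^sup>2) / 2"
    by (rule amgm)
  have b: "(f1 - f0 - h1 + h0)\<^sup>2 \<le> 4 * (f1\<^sup>2 + f0\<^sup>2 + h1\<^sup>2 + h0\<^sup>2)"
    using sq4[of f1 "-f0" "-h1" h0] by simp
  have c: "(h1 - h0 - th)\<^sup>2 \<le> 3 * (h1\<^sup>2 + h0\<^sup>2 + th\<^sup>2)"
    using sq3[of h1 "-h0" "-th"] by simp
  have "0 \<le> f1\<^sup>2" "0 \<le> f0\<^sup>2" "0 \<le> h1\<^sup>2" "0 \<le> h0\<^sup>2" "0 \<le> th\<^sup>2" by simp_all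
  note nn = this
  show ?thesis by (rule lin_aux[OF a b c nn])
qed

lemma fine_bound:
  fixes f1 f0 h1 h0 th s :: real
  assumes s: "0 < s"
  shows "\<bar>(f1 - f0 - h1 + h0) * (h1 - h0 - th)\<bar>
     \<le> (2 + 1 / s) * ((h1 - f1)\<^sup>2 + (h0 - f0)\<^sup>2) + s / 2 * (f1 - f0 - th)\<^sup>2"
proof -
  define D where "D = (h1 - f1) - (h0 - f0)"
  define c where "c = f1 - f0 - th"
  have e: "(f1 - f0 - h1 + h0) * (h1 - h0 - th) = - (D\<^sup>2 + D * c)"
    unfolding D_def c_def by (simp add: power2_eq_square algebra_simps)
  have "\<bar>D * c\<bar> = \<bar>(D / sqrt s) * (c * sqrt s)\<bar>" using s by simp
  also have "\<dots> \<le> ((D / sqrt s)\<^sup>2 + (c * sqrt s)\<^sup>2) / 2" by (rule amgm)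
  also have "\<dots> = D\<^sup>2 / (2 * s) + s / 2 * c\<^sup>2" using s by (simp add: power_divide power_mult_distrib)
  finally have dc: "\<bar>D * c\<bar> \<le> D\<^sup>2 / (2 * s) + s / 2 * c\<^sup>2" .
  have D2: "D\<^sup>2 \<le> 2 * ((h1 - f1)\<^sup>2 + (h0 - f0)\<^sup>2)"
  proof -
    have "D = (h1 - f1) + (f0 - h0)" unfolding D_def by simp
    moreover have "(f0 - h0)\<^sup>2 = (h0 - f0)\<^sup>2" by (rule power2_commute)
    ultimately show ?thesis using sq2[of "h1 - f1" "f0 - h0"] by simp
  qed
  have "\<bar>(f1 - f0 - h1 + h0) * (h1 - h0 - th)\<bar> \<le> D\<^sup>2 + D\<^sup>2 / (2 * s) + s / 2 * c\<^sup>2"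
  proof -
    have "\<bar>D\<^sup>2 + D * c\<bar> \<le> \<bar>D\<^sup>2\<bar> + \<bar>D * c\<bar>" by (rule abs_triangle_ineq)
    then have "\<bar>- (D\<^sup>2 + D * c)\<bar> \<le> D\<^sup>2 + \<bar>D * c\<bar>" by simp
    then show ?thesis unfolding e using dc by linarith
  qed
  also have "\<dots> = (1 + 1 / (2 * s)) * D\<^sup>2 + s / 2 * c\<^sup>2" by (simp add: algebra_simps)
  also have "\<dots> \<le> (1 + 1 / (2 * s)) * (2 * ((h1 - f1)\<^sup>2 + (h0 - f0)\<^sup>2)) + s / 2 * c\<^sup>2"
    using D2 s by (intro add_mono mult_left_mono) auto
  also have "\<dots> = (2 + 1 / s) * ((h1 - f1)\<^sup>2 + (h0 - f0)\<^sup>2) + s / 2 * c\<^sup>2"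
    using s by (simp add: field_simps)
  finally show ?thesis unfolding c_def .
qed

lemma integrable_of_trunc:
  fixes y :: "'a \<Rightarrow> real"
  assumes [measurable]: "y \<in> borel_measurable M" and nn: "\<And>x. 0 \<le> y x"
    and int: "\<And>n. integrable M (\<lambda>x. min (y x) (real n))"
    and bd: "\<And>n. (\<integral>x. min (y x) (real n) \<partial>M) \<le> K"
  shows "integrable M y"
proof (rule integrableI_bounded)
  show "y \<in> borel_measurable M" by simp
  have inc: "incseq (\<lambda>n x. ennreal (min (y x) (real n)))"
    by (auto simp: incseq_def le_fun_def intro!: ennreal_leI)
  have lim: "(\<lambda>n. ennreal (min (y x) (real n))) \<longlonglongrightarrow> ennreal (y x)" for x
  proof (rule tendsto_ennrealI, rule tendsto_eventually)
    obtain N where "y x \<le> real N" using real_arch_simple by blast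
    then show "\<forall>\<^sub>F n in sequentially. min (y x) (real n) = y x"
      unfolding eventually_sequentially by (intro exI[of _ N]) auto
  qed
  have L: "(\<lambda>n. \<integral>\<^sup>+x. ennreal (min (y x) (real n)) \<partial>M) \<longlonglongrightarrow> (\<integral>\<^sup>+x. ennreal (y x) \<partial>M)"
    by (rule nn_integral_LIMSEQ[OF inc]) (auto intro: lim)
  have "(\<integral>\<^sup>+x. ennreal (min (y x) (real n)) \<partial>M) \<le> ennreal K" for n
  proof -
    have "(\<integral>\<^sup>+x. ennreal (min (y x) (real n)) \<partial>M) = ennreal (\<integral>x. min (y x) (real n) \<partial>M)"
      by (rule nn_integral_eq_integral[OF int]) (simp add: nn)
    then show ?thesis using bd[of n] by (simp add: ennreal_leI)
  qed
  then have "(\<integral>\<^sup>+x. ennreal (y x) \<partial>M) \<le> ennreal K"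
    by (intro LIMSEQ_le_const2[OF L]) auto
  also have "\<dots> < \<infinity>" by simp
  finally show "(\<integral>\<^sup>+x. ennreal (norm (y x)) \<partial>M) < \<infinity>" using nn by simp
qed


lemma subalg_id_meas:
  assumes H: "subalgebra M H"
  shows "(\<lambda>\<omega>. \<omega>) \<in> M \<rightarrow>\<^sub>M H"
proof (rule measurableI)
  fix x assume "x \<in> space M" thus "x \<in> space H" using H by (simp add: subalgebra_def)
next
  fix A assume A: "A \<in> sets H"
  then have "A \<subseteq> space M" using H sets.sets_into_space[of A H] by (simp add: subalgebra_def)
  thus "(\<lambda>\<omega>. \<omega>) -` A \<inter> space M \<in> sets M" using A H by (auto simp: subalgebra_def Int_absorb2)
qed

lemma L2_from_propensity:
  fixes Y W ind :: "'a \<Rightarrow> real" and c :: real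
  assumes M: "prob_space M" and F: "subalgebra M F"
    and Ym[measurable]: "Y \<in> borel_measurable F"
    and indm[measurable]: "ind \<in> borel_measurable M" and ind01: "\<And>\<omega>. 0 \<le> ind \<omega> \<and> ind \<omega> \<le> 1"
    and c: "0 < c" and CE: "AE \<omega> in M. c \<le> real_cond_exp M F ind \<omega>"
    and W: "integrable M W" and dom: "\<And>\<omega>. \<omega> \<in> space M \<Longrightarrow> ind \<omega> * (Y \<omega>)\<^sup>2 \<le> W \<omega>"
  shows "integrable M (\<lambda>\<omega>. (Y \<omega>)\<^sup>2)"
proof -
  interpret S: sigma_finite_subalgebra M F by (rule sfs_of_prob[OF M F])
  interpret P: prob_space M by (rule M)
  have YM[measurable]: "Y \<in> borel_measurable M" by (rule measurable_from_subalg[OF F Ym])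
  show ?thesis
  proof (rule integrable_of_trunc)
    show "(\<lambda>\<omega>. (Y \<omega>)\<^sup>2) \<in> borel_measurable M" by measurable
    show "\<And>x. 0 \<le> (Y x)\<^sup>2" by simp
    fix n :: nat
    define h where "h \<omega> = min ((Y \<omega>)\<^sup>2) (real n)" for \<omega>
    have hF[measurable]: "h \<in> borel_measurable F" unfolding h_def by measurable
    have hM[measurable]: "h \<in> borel_measurable M" unfolding h_def by measurable
    have hb: "0 \<le> h \<omega>" "h \<omega> \<le> real n" for \<omega> unfolding h_def by auto
    have int_h: "integrable M h"
      by (rule Bochner_Integration.integrable_bound[OF P.integrable_const[of "real n"]]) (auto simp: hb abs_of_nonneg)
    show "integrable M (\<lambda>x. min ((Y x)\<^sup>2) (real n))" using int_h unfolding h_def .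
    have int_hi: "integrable M (\<lambda>\<omega>. h \<omega> * ind \<omega>)"
    proof (rule Bochner_Integration.integrable_bound[OF P.integrable_const[of "real n"]])
      show "(\<lambda>\<omega>. h \<omega> * ind \<omega>) \<in> borel_measurable M" by measurable
      show "AE x in M. norm (h x * ind x) \<le> norm (real n)"
      proof (rule AE_I2)
        fix x
        have "h x * ind x \<le> h x * 1" using hb[of x] ind01[of x] by (intro mult_left_mono) auto
        then show "norm (h x * ind x) \<le> norm (real n)"
          using hb[of x] ind01[of x] by (simp add: abs_mult)
      qed
    qed
    have eq: "(\<integral>\<omega>. h \<omega> * real_cond_exp M F ind \<omega> \<partial>M) = (\<integral>\<omega>. h \<omega> * ind \<omega> \<partial>M)"
      and int_hce: "integrable M (\<lambda>\<omega>. h \<omega> * real_cond_exp M F ind \<omega>)"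
      using S.real_cond_exp_intg[OF int_hi hF indm] by auto
    have "(\<integral>\<omega>. h \<omega> * c \<partial>M) \<le> (\<integral>\<omega>. h \<omega> * real_cond_exp M F ind \<omega> \<partial>M)"
      by (rule integral_mono_AE[OF _ int_hce]) (use int_h CE hb in \<open>auto intro: mult_left_mono\<close>)
    also have "\<dots> \<le> (\<integral>\<omega>. W \<omega> \<partial>M)"
      unfolding eq
    proof (rule integral_mono[OF int_hi W])
      fix \<omega> assume "\<omega> \<in> space M"
      have "h \<omega> * ind \<omega> \<le> (Y \<omega>)\<^sup>2 * ind \<omega>"
        using ind01[of \<omega>] by (intro mult_right_mono) (auto simp: h_def)
      then show "h \<omega> * ind \<omega> \<le> W \<omega>" using dom[OF \<open>\<omega> \<in> space M\<close>] by (simp add: mult.commute)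
    qed
    finally have "(\<integral>\<omega>. h \<omega> \<partial>M) * c \<le> (\<integral>\<omega>. W \<omega> \<partial>M)" by simp
    then show "(\<integral>\<omega>. min ((Y \<omega>)\<^sup>2) (real n) \<partial>M) \<le> (\<integral>\<omega>. W \<omega> \<partial>M) / c"
      using c unfolding h_def by (simp add: field_simps)
  qed
qed

lemma G_bound:
  fixes f1 f0 h1 h0 :: "'x \<Rightarrow> real" and th s :: real
  assumes P: "finite_measure P"
    and m[measurable]: "f1 \<in> borel_measurable P" "f0 \<in> borel_measurable P" "h1 \<in> borel_measurable P" "h0 \<in> borel_measurable P"
    and i: "integrable P (\<lambda>x. (f1 x)\<^sup>2)" "integrable P (\<lambda>x. (f0 x)\<^sup>2)" "integrable P (\<lambda>x. (h1 x)\<^sup>2)" "integrable P (\<lambda>x. (h0 x)\<^sup>2)"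
    and s: "0 < s"
  shows "\<bar>\<integral>x. (f1 x - f0 x - h1 x + h0 x) * (h1 x - h0 x - th) \<partial>P\<bar>
    \<le> (2 + 1 / s) * ((\<integral>x. (h1 x - f1 x)\<^sup>2 \<partial>P) + (\<integral>x. (h0 x - f0 x)\<^sup>2 \<partial>P)) + s / 2 * (\<integral>x. (f1 x - f0 x - th)\<^sup>2 \<partial>P)"
proof -
  interpret finite_measure P by (rule P)
  have d: "integrable P (\<lambda>x. (h x - f x)\<^sup>2)"
    if hm[measurable]: "h \<in> borel_measurable P" and fm[measurable]: "f \<in> borel_measurable P"
      and hi: "integrable P (\<lambda>x. (h x)\<^sup>2)" and fi: "integrable P (\<lambda>x. (f x)\<^sup>2)" for h f :: "'x \<Rightarrow> real"
  proof -
    have bi: "integrable P (\<lambda>x. 2 * (h x)\<^sup>2 + 2 * (f x)\<^sup>2)" using hi fi by auto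
    show ?thesis
    proof (rule Bochner_Integration.integrable_bound[OF bi])
    show "(\<lambda>x. (h x - f x)\<^sup>2) \<in> borel_measurable P" by measurable
    show "AE x in P. norm ((h x - f x)\<^sup>2) \<le> norm (2 * (h x)\<^sup>2 + 2 * (f x)\<^sup>2)"
      using sq2[of "h _" "- f _"] by (auto simp: algebra_simps)
    qed
  qed
  have d1: "integrable P (\<lambda>x. (h1 x - f1 x)\<^sup>2)" by (rule d) (simp_all add: i)
  have d0: "integrable P (\<lambda>x. (h0 x - f0 x)\<^sup>2)" by (rule d) (simp_all add: i)
  have ci: "integrable P (\<lambda>x. (f1 x - f0 x - th)\<^sup>2)"
  proof -
    have bi: "integrable P (\<lambda>x. 3 * (f1 x)\<^sup>2 + 3 * (f0 x)\<^sup>2 + 3 * th\<^sup>2)" using i by auto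
    show ?thesis
    proof (rule Bochner_Integration.integrable_bound[OF bi])
    show "(\<lambda>x. (f1 x - f0 x - th)\<^sup>2) \<in> borel_measurable P" by measurable
    show "AE x in P. norm ((f1 x - f0 x - th)\<^sup>2) \<le> norm (3 * (f1 x)\<^sup>2 + 3 * (f0 x)\<^sup>2 + 3 * th\<^sup>2)"
      using sq3[of "f1 _" "- f0 _" "- th"] by (auto simp: algebra_simps)
    qed
  qed
  have RI: "integrable P (\<lambda>x. (2 + 1 / s) * ((h1 x - f1 x)\<^sup>2 + (h0 x - f0 x)\<^sup>2) + s / 2 * (f1 x - f0 x - th)\<^sup>2)"
    using d1 d0 ci by auto
  have "\<bar>\<integral>x. (f1 x - f0 x - h1 x + h0 x) * (h1 x - h0 x - th) \<partial>P\<bar>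
      \<le> (\<integral>x. \<bar>(f1 x - f0 x - h1 x + h0 x) * (h1 x - h0 x - th)\<bar> \<partial>P)" by (rule integral_abs_bound)
  also have "\<dots> \<le> (\<integral>x. (2 + 1 / s) * ((h1 x - f1 x)\<^sup>2 + (h0 x - f0 x)\<^sup>2) + s / 2 * (f1 x - f0 x - th)\<^sup>2 \<partial>P)"
    by (rule integral_mono'[OF RI]) (use s fine_bound[OF s] in auto)
  also have "\<dots> = (2 + 1 / s) * ((\<integral>x. (h1 x - f1 x)\<^sup>2 \<partial>P) + (\<integral>x. (h0 x - f0 x)\<^sup>2 \<partial>P)) + s / 2 * (\<integral>x. (f1 x - f0 x - th)\<^sup>2 \<partial>P)"
    using d1 d0 ci by (simp add: integral_add)
  finally show ?thesis .
qed

lemma eps_arith: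
  fixes e Cc G I1 I0 s \<delta> :: real
  assumes e: "0 < e" and Cc: "0 \<le> Cc" and G: "\<bar>G\<bar> \<le> (2 + 1 / s) * (I1 + I0) + s / 2 * Cc"
    and I: "I1 \<le> \<delta>" "I0 \<le> \<delta>"
    and sd: "s = e / (4 * (Cc + 1))" and dd: "\<delta> = e / (8 * (2 + 1 / s))"
  shows "\<bar>2 * G\<bar> < e"
proof -
  have s: "0 < s" unfolding sd using e Cc by simp
  have p: "0 < 2 + 1 / s" using s by (simp add: add_pos_pos)
  have "(2 + 1 / s) * (I1 + I0) \<le> (2 + 1 / s) * (2 * \<delta>)"
    using I p by (intro mult_left_mono) auto
  also have "\<dots> = e / 4" unfolding dd using p by (simp add: field_simps)
  finally have a: "(2 + 1 / s) * (I1 + I0) \<le> e / 4" .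
  have "s / 2 * Cc = e / 8 * (Cc / (Cc + 1))" unfolding sd using Cc by (simp add: field_simps)
  also have "\<dots> < e / 8 * 1"
    using e Cc by (intro mult_strict_left_mono) (auto simp: field_simps)
  finally have b: "s / 2 * Cc < e / 8" by simp
  have c: "\<bar>G\<bar> < e / 4 + e / 8" using G a b by linarith
  show ?thesis using c e by (simp add: abs_mult)
qed



theorem lemma2:
  fixes M :: "'a measure" and MX :: "'x measure"
    and X :: "nat \<Rightarrow> 'a \<Rightarrow> 'x" and Y0 Y1 :: "nat \<Rightarrow> 'a \<Rightarrow> real"
    and A :: "nat \<Rightarrow> 'a \<Rightarrow> bool"
    and pit :: "nat \<Rightarrow> 'a \<Rightarrow> 'x \<Rightarrow> real" and k :: "nat \<Rightarrow> real"
    and f v :: "bool \<Rightarrow> 'x \<Rightarrow> real"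
    and fhat :: "nat \<Rightarrow> 'a \<Rightarrow> bool \<Rightarrow> 'x \<Rightarrow> real"
    and pilim :: "'x \<Rightarrow> real" and C1 :: real
  assumes M: "prob_space M"
    and meas_X: "\<And>t. t \<ge> 1 \<Longrightarrow> X t \<in> M \<rightarrow>\<^sub>M MX"
    and meas_Y0: "\<And>t. t \<ge> 1 \<Longrightarrow> Y0 t \<in> borel_measurable M"
    and meas_Y1: "\<And>t. t \<ge> 1 \<Longrightarrow> Y1 t \<in> borel_measurable M"
    and meas_A: "\<And>t. t \<ge> 1 \<Longrightarrow> A t \<in> M \<rightarrow>\<^sub>M count_space UNIV"
    and indep: "prob_space.indep_vars M (\<lambda>_. MX \<Otimes>\<^sub>M borel \<Otimes>\<^sub>M borel)
                  (\<lambda>t \<omega>. (X t \<omega>, Y0 t \<omega>, Y1 t \<omega>)) {1..}"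
    and ident: "\<And>t. t \<ge> 1 \<Longrightarrow>
                  distr M (MX \<Otimes>\<^sub>M borel \<Otimes>\<^sub>M borel) (\<lambda>\<omega>. (X t \<omega>, Y0 t \<omega>, Y1 t \<omega>))
                  = distr M (MX \<Otimes>\<^sub>M borel \<Otimes>\<^sub>M borel) (\<lambda>\<omega>. (X 1 \<omega>, Y0 1 \<omega>, Y1 1 \<omega>))"
    and indep_hist: "\<And>t. t \<ge> 1 \<Longrightarrow>
                  prob_space.indep_set M (sets (hist M MX X A Y0 Y1 (t - 1)))
                    (preimgs M (MX \<Otimes>\<^sub>M borel \<Otimes>\<^sub>M borel) (\<lambda>\<omega>. (X t \<omega>, Y0 t \<omega>, Y1 t \<omega>)))"
    and k_ge: "\<And>t. t \<ge> 1 \<Longrightarrow> 2 \<le> k t"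
    and pit_range: "\<And>t \<omega> x. t \<ge> 1 \<Longrightarrow> 0 < pit t \<omega> x \<and> pit t \<omega> x < 1"
    and pit_meas: "\<And>t. t \<ge> 1 \<Longrightarrow>
                  (\<lambda>(\<omega>, x). pit t \<omega> x) \<in> borel_measurable (hist M MX X A Y0 Y1 (t - 1) \<Otimes>\<^sub>M MX)"
    and propensity: "\<And>t. t \<ge> 1 \<Longrightarrow> AE \<omega> in M.
                  real_cond_exp M (propalg M MX X A Y0 Y1 t) (\<lambda>\<omega>. if A t \<omega> then 1 else 0) \<omega>
                  = trunc (k t) (pit t \<omega> (X t \<omega>))"
    and f_meas: "\<And>a. f a \<in> borel_measurable MX"
    and f_def: "\<And>a t. t \<ge> 1 \<Longrightarrow> AE \<omega> in M.
                  real_cond_exp M (vimage_algebra (space M) (X t) MX) (ypot Y0 Y1 a t) \<omega> = f a (X t \<omega>)"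
    and v_meas: "\<And>a. v a \<in> borel_measurable MX"
    and v_nonneg: "\<And>a x. x \<in> space MX \<Longrightarrow> 0 \<le> v a x"
    and v_def: "\<And>a t. t \<ge> 1 \<Longrightarrow> AE \<omega> in M.
                  nn_cond_exp M (vimage_algebra (space M) (X t) MX)
                    (\<lambda>\<omega>. ennreal ((ypot Y0 Y1 a t \<omega> - f a (X t \<omega>))\<^sup>2)) \<omega> = ennreal (v a (X t \<omega>))"
    and var_Y: "\<And>t. t \<ge> 1 \<Longrightarrow> integrable M (\<lambda>\<omega>. (yobs A Y0 Y1 t \<omega>)\<^sup>2)"
    and fhat_meas: "\<And>t a. (\<lambda>(\<omega>, x). fhat t \<omega> a x) \<in> borel_measurable (hist M MX X A Y0 Y1 t \<Otimes>\<^sub>M MX)"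
    and fhat_rate: "\<And>a. conv_in_prob M (\<lambda>t \<omega>. k (Suc t) *
                  l2norm (distr M MX (X 1)) (\<lambda>x. fhat (Suc t) \<omega> a x - f a x))"
    and pilim_meas: "pilim \<in> borel_measurable MX"
    and pilim_range: "\<And>x. x \<in> space MX \<Longrightarrow> 0 < pilim x \<and> pilim x < 1"
    and pi_rate: "conv_in_prob M (\<lambda>t \<omega>. k (Suc t) *
                  l2norm (distr M MX (X 1)) (\<lambda>x. trunc (k (Suc t)) (pit (Suc t) \<omega> x) - pilim x))"
    and aipw_bound: "\<And>a x. x \<in> space MX \<Longrightarrow> 0 < aipw v a x \<and> 1 / aipw v a x < C1"
    and var_fhat: "\<And>a t. t \<ge> 1 \<Longrightarrow> integrable M (\<lambda>\<omega>. (fhat (t - 1) \<omega> a (X t \<omega>))\<^sup>2)"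
  shows "conv_in_prob M (\<lambda>t \<omega>. 2 * real_cond_exp M (hist M MX X A Y0 Y1 t)
           (\<lambda>\<omega>. (f True (X (Suc t) \<omega>) - f False (X (Suc t) \<omega>)
                  - fhat t \<omega> True (X (Suc t) \<omega>) + fhat t \<omega> False (X (Suc t) \<omega>))
               * (fhat t \<omega> True (X (Suc t) \<omega>) - fhat t \<omega> False (X (Suc t) \<omega>)
                  - prob_space.expectation M (\<lambda>\<omega>. Y1 1 \<omega> - Y0 1 \<omega>))) \<omega>)"
proof -
  interpret prob_space M by (rule M)
  define H where "H t = hist M MX X A Y0 Y1 t" for t
  define PX where "PX = distr M MX (X 1)"
  define \<theta> where "\<theta> = expectation (\<lambda>\<omega>. Y1 1 \<omega> - Y0 1 \<omega>)"
  have Aset: "{\<omega> \<in> space M. A s \<omega>} \<in> sets M" if s: "1 \<le> s" for s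
  proof -
    have "A s -` {True} \<inter> space M \<in> sets M" by (rule measurable_sets[OF meas_A[OF s]]) simp
    moreover have "A s -` {True} \<inter> space M = {\<omega> \<in> space M. A s \<omega>}" by auto
    ultimately show ?thesis by simp
  qed
  have yobs_meas: "yobs A Y0 Y1 s \<in> borel_measurable M" if s: "1 \<le> s" for s
    unfolding yobs_def[abs_def] by (rule measurable_If[OF meas_Y1[OF s] meas_Y0[OF s] Aset[OF s]])
  have Hsub: "subalgebra M (H t)" for t
    unfolding H_def hist_def
  proof (rule sigma_subalg)
    show "(\<Union>s\<in>{1..t}. preimgs M MX (X s) \<union> preimgs M (count_space UNIV) (A s) \<union> preimgs M borel (yobs A Y0 Y1 s)) \<subseteq> sets M"
    proof
      fix E assume "E \<in> (\<Union>s\<in>{1..t}. preimgs M MX (X s) \<union> preimgs M (count_space UNIV) (A s) \<union> preimgs M borel (yobs A Y0 Y1 s))"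
      then obtain s where s: "s \<in> {1..t}" and E: "E \<in> preimgs M MX (X s) \<union> preimgs M (count_space UNIV) (A s) \<union> preimgs M borel (yobs A Y0 Y1 s)"
        by blast
      then have s1: "1 \<le> s" by simp
      from E show "E \<in> sets M" unfolding preimgs_def
        using meas_X[OF s1] meas_A[OF s1] yobs_meas[OF s1] by (auto intro: measurable_sets)
    qed
  qed
  have tup_meas: "(\<lambda>\<omega>. (X t \<omega>, Y0 t \<omega>, Y1 t \<omega>)) \<in> M \<rightarrow>\<^sub>M MX \<Otimes>\<^sub>M borel \<Otimes>\<^sub>M borel" if t: "1 \<le> t" for t
    by (intro measurable_Pair meas_X[OF t] meas_Y0[OF t] meas_Y1[OF t])
  have distX: "distr M MX (X t) = PX" if t: "1 \<le> t" for t
  proof -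
    have fm: "fst \<in> MX \<Otimes>\<^sub>M borel \<Otimes>\<^sub>M borel \<rightarrow>\<^sub>M MX" by (rule measurable_fst)
    have e: "distr M MX (X u) = distr (distr M (MX \<Otimes>\<^sub>M borel \<Otimes>\<^sub>M borel) (\<lambda>\<omega>. (X u \<omega>, Y0 u \<omega>, Y1 u \<omega>))) MX fst"
      if u: "1 \<le> u" for u
      by (subst distr_distr[OF fm tup_meas[OF u]]) (simp add: comp_def)
    have e1: "distr M MX (X 1) = distr (distr M (MX \<Otimes>\<^sub>M borel \<Otimes>\<^sub>M borel) (\<lambda>\<omega>. (X 1 \<omega>, Y0 1 \<omega>, Y1 1 \<omega>))) MX fst"
      by (rule e) simp
    show ?thesis unfolding PX_def e[OF t] e1 ident[OF t] ..
  qed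
  have fsq: "integrable PX (\<lambda>x. (f a x)\<^sup>2)" for a
  proof -
    define G1 where "G1 = sets (hist M MX X A Y0 Y1 (1 - 1)) \<union> preimgs M MX (X 1)
       \<union> preimgs M borel (Y0 1) \<union> preimgs M borel (Y1 1)"
    have P1eq: "propalg M MX X A Y0 Y1 1 = sigma (space M) G1"
      unfolding propalg_def G1_def ..
    have G1sub: "G1 \<subseteq> sets M"
      using Hsub[of 0] meas_X[of 1] meas_Y0[of 1] meas_Y1[of 1]
      unfolding G1_def by (auto simp: H_def subalgebra_def preimgs_def intro: measurable_sets)
    have G1pow: "G1 \<subseteq> Pow (space M)" using G1sub sets.sets_into_space by blast
    have P1sub: "subalgebra M (propalg M MX X A Y0 Y1 1)"
      unfolding P1eq by (rule sigma_subalg[OF G1sub])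
    have Y1m: "Y1 1 \<in> borel_measurable (propalg M MX X A Y0 Y1 1)"
      unfolding P1eq by (rule meas_gen[OF _ _ G1pow]) (auto simp: G1_def preimgs_def)
    have Y0m: "Y0 1 \<in> borel_measurable (propalg M MX X A Y0 Y1 1)"
      unfolding P1eq by (rule meas_gen[OF _ _ G1pow]) (auto simp: G1_def preimgs_def)
    interpret S1: sigma_finite_subalgebra M "propalg M MX X A Y0 Y1 1" by (rule sfs_of_prob[OF M P1sub])
    define ind where "ind \<omega> = (if A 1 \<omega> then 1 else 0::real)" for \<omega>
    have indm: "ind \<in> borel_measurable M"
      unfolding ind_def[abs_def] by (rule measurable_If[OF _ _ Aset]) simp_all
    have indi: "integrable M ind"
      by (rule Bochner_Integration.integrable_bound[OF integrable_const[of "1::real"] indm]) (auto simp: ind_def)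
    have k1: "2 \<le> k 1" by (rule k_ge) simp
    have kpos: "0 < 1 / k 1" using k1 by simp
    have CE1: "AE \<omega> in M. 1 / k 1 \<le> real_cond_exp M (propalg M MX X A Y0 Y1 1) ind \<omega>"
      using propensity[of 1] trunc_bounds(1)[OF k1] by (auto simp: ind_def[abs_def])
    have CE1u: "AE \<omega> in M. real_cond_exp M (propalg M MX X A Y0 Y1 1) ind \<omega> \<le> 1 - 1 / k 1"
      using propensity[of 1] trunc_bounds(2)[OF k1] by (auto simp: ind_def[abs_def])
    have W: "integrable M (\<lambda>\<omega>. (yobs A Y0 Y1 1 \<omega>)\<^sup>2)" by (rule var_Y) simp
    have sq1: "integrable M (\<lambda>\<omega>. (Y1 1 \<omega>)\<^sup>2)"
    proof (rule L2_from_propensity[OF M P1sub Y1m indm _ kpos CE1 W])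
      show "\<And>\<omega>. 0 \<le> ind \<omega> \<and> ind \<omega> \<le> 1" by (simp add: ind_def)
      show "\<And>\<omega>. \<omega> \<in> space M \<Longrightarrow> ind \<omega> * (Y1 1 \<omega>)\<^sup>2 \<le> (yobs A Y0 Y1 1 \<omega>)\<^sup>2"
        by (simp add: ind_def yobs_def)
    qed
    have sq0: "integrable M (\<lambda>\<omega>. (Y0 1 \<omega>)\<^sup>2)"
    proof (rule L2_from_propensity[OF M P1sub Y0m _ _ kpos _ W])
      show "(\<lambda>\<omega>. 1 - ind \<omega>) \<in> borel_measurable M" using indm by measurable
      show "\<And>\<omega>. 0 \<le> 1 - ind \<omega> \<and> 1 - ind \<omega> \<le> 1" by (simp add: ind_def)
      show "\<And>\<omega>. \<omega> \<in> space M \<Longrightarrow> (1 - ind \<omega>) * (Y0 1 \<omega>)\<^sup>2 \<le> (yobs A Y0 Y1 1 \<omega>)\<^sup>2"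
        by (simp add: ind_def yobs_def)
      have a1: "AE \<omega> in M. real_cond_exp M (propalg M MX X A Y0 Y1 1) (\<lambda>\<omega>. 1 - ind \<omega>) \<omega>
          = real_cond_exp M (propalg M MX X A Y0 Y1 1) (\<lambda>\<omega>. 1) \<omega> - real_cond_exp M (propalg M MX X A Y0 Y1 1) ind \<omega>"
        by (rule S1.real_cond_exp_diff[OF integrable_const indi])
      have a2: "AE \<omega> in M. real_cond_exp M (propalg M MX X A Y0 Y1 1) (\<lambda>\<omega>. 1) \<omega> = 1"
        by (rule S1.real_cond_exp_F_meas) simp_all
      show "AE \<omega> in M. 1 / k 1 \<le> real_cond_exp M (propalg M MX X A Y0 Y1 1) (\<lambda>\<omega>. 1 - ind \<omega>) \<omega>"
        using a1 a2 CE1u by eventually_elim simp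
    qed
    define Ya where "Ya = ypot Y0 Y1 a 1"
    have Yam: "Ya \<in> borel_measurable M"
      using meas_Y1[of 1] meas_Y0[of 1] by (cases a) (simp_all add: Ya_def ypot_def[abs_def])
    have Yasq: "integrable M (\<lambda>\<omega>. (Ya \<omega>)\<^sup>2)"
      using sq1 sq0 by (cases a) (simp_all add: Ya_def ypot_def[abs_def])
    have Yai: "integrable M Ya" by (rule square_integrable_imp_integrable[OF Yam Yasq])
    have X1: "X 1 \<in> M \<rightarrow>\<^sub>M MX" by (rule meas_X) simp
    have Vsub: "subalgebra M (vimage_algebra (space M) (X 1) MX)"
      unfolding subalgebra_def
      using sets_vimage_algebra2[of "X 1" "space M" MX] measurable_space[OF X1] measurable_sets[OF X1]
      by auto
    interpret SV: sigma_finite_subalgebra M "vimage_algebra (space M) (X 1) MX" by (rule sfs_of_prob[OF M Vsub])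
    have CEsq: "integrable M (\<lambda>\<omega>. (real_cond_exp M (vimage_algebra (space M) (X 1) MX) Ya \<omega>)\<^sup>2)"
      by (rule SV.integrable_convex_cond_exp[where I=UNIV and q="\<lambda>x. x\<^sup>2", OF Yai])
         (simp_all add: Yasq convex_power2)
    have fX: "(\<lambda>\<omega>. (f a (X 1 \<omega>))\<^sup>2) \<in> borel_measurable M"
      using measurable_compose[OF X1 f_meas[of a]] by measurable
    have "integrable M (\<lambda>\<omega>. (f a (X 1 \<omega>))\<^sup>2)"
    proof (subst integrable_cong_AE[OF fX])
      show "(\<lambda>\<omega>. (real_cond_exp M (vimage_algebra (space M) (X 1) MX) Ya \<omega>)\<^sup>2) \<in> borel_measurable M"
        by measurable
      show "AE \<omega> in M. (f a (X 1 \<omega>))\<^sup>2 = (real_cond_exp M (vimage_algebra (space M) (X 1) MX) Ya \<omega>)\<^sup>2"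
        using f_def[of 1 a] unfolding Ya_def by auto
    qed (rule CEsq)
    moreover have "(\<lambda>x. (f a x)\<^sup>2) \<in> borel_measurable MX" using f_meas[of a] by measurable
    ultimately show ?thesis
      unfolding PX_def by (subst integrable_distr_eq[OF X1]) simp_all
  qed
  interpret PXp: prob_space PX unfolding PX_def by (rule prob_space_distr) (rule meas_X, simp)
  define gg where "gg t \<omega> x = (f True x - f False x - fhat t \<omega> True x + fhat t \<omega> False x)
      * (fhat t \<omega> True x - fhat t \<omega> False x - \<theta>)" for t \<omega> x
  define CE where "CE t = real_cond_exp M (H t) (\<lambda>\<omega>. gg t \<omega> (X (Suc t) \<omega>))" for t
  have fhm: "(\<lambda>p. fhat t (fst p) a (snd p)) \<in> borel_measurable (H t \<Otimes>\<^sub>M MX)" for t a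
    using fhat_meas[of t a] unfolding H_def by (simp add: case_prod_unfold)
  have fm2: "(\<lambda>p. f a (snd p)) \<in> borel_measurable (H t \<Otimes>\<^sub>M MX)" for t a
    by (rule measurable_compose[OF measurable_snd f_meas])
  have ggm: "(\<lambda>(\<omega>, x). gg t \<omega> x) \<in> borel_measurable (H t \<Otimes>\<^sub>M MX)" for t
  proof -
    note [measurable] = fhm[of t True] fhm[of t False] fm2[of True t] fm2[of False t]
    show ?thesis unfolding gg_def case_prod_unfold by measurable
  qed
  have fhsqm: "(\<lambda>(\<omega>, x). (fhat t \<omega> a x)\<^sup>2) \<in> borel_measurable (H t \<Otimes>\<^sub>M MX)" for t a
  proof -
    note [measurable] = fhm[of t a]
    show ?thesis unfolding case_prod_unfold by measurable
  qed
  have indt: "indep_set (sets (H t)) {X (Suc t) -` B \<inter> space M | B. B \<in> sets MX}" for t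
  proof -
    have t1: "1 \<le> Suc t" by simp
    have ih: "indep_set (sets (H t)) (preimgs M (MX \<Otimes>\<^sub>M borel \<Otimes>\<^sub>M borel) (\<lambda>\<omega>. (X (Suc t) \<omega>, Y0 (Suc t) \<omega>, Y1 (Suc t) \<omega>)))"
      using indep_hist[OF t1] unfolding H_def by simp
    have sub: "{X (Suc t) -` B \<inter> space M | B. B \<in> sets MX}
        \<subseteq> preimgs M (MX \<Otimes>\<^sub>M borel \<Otimes>\<^sub>M borel) (\<lambda>\<omega>. (X (Suc t) \<omega>, Y0 (Suc t) \<omega>, Y1 (Suc t) \<omega>))"
    proof
      fix E assume "E \<in> {X (Suc t) -` B \<inter> space M | B. B \<in> sets MX}"
      then obtain B where B: "B \<in> sets MX" and E: "E = X (Suc t) -` B \<inter> space M" by blast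
      have "B \<times> space (borel \<Otimes>\<^sub>M borel) \<in> sets (MX \<Otimes>\<^sub>M borel \<Otimes>\<^sub>M borel)"
        by (rule pair_measureI[OF B sets.top])
      moreover have "E = (\<lambda>\<omega>. (X (Suc t) \<omega>, Y0 (Suc t) \<omega>, Y1 (Suc t) \<omega>)) -` (B \<times> space (borel \<Otimes>\<^sub>M borel)) \<inter> space M"
        unfolding E by (auto simp: space_pair_measure)
      ultimately show "E \<in> preimgs M (MX \<Otimes>\<^sub>M borel \<Otimes>\<^sub>M borel) (\<lambda>\<omega>. (X (Suc t) \<omega>, Y0 (Suc t) \<omega>, Y1 (Suc t) \<omega>))"
        unfolding preimgs_def by blast
    qed
    show ?thesis using ih sub unfolding indep_sets2_eq by blast
  qed
  have Xs: "X (Suc t) \<in> M \<rightarrow>\<^sub>M MX" for t by (rule meas_X) simp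
  have pmt: "(\<lambda>\<omega>. (\<omega>, X (Suc t) \<omega>)) \<in> M \<rightarrow>\<^sub>M H t \<Otimes>\<^sub>M MX" for t
    by (rule measurable_Pair[OF subalg_id_meas[OF Hsub] Xs])
  have sqf: "integrable M (\<lambda>\<omega>. (f a (X (Suc t) \<omega>))\<^sup>2)" for a t
  proof -
    have m: "(\<lambda>x. (f a x)\<^sup>2) \<in> borel_measurable MX" using f_meas[of a] by measurable
    have "integrable (distr M MX (X (Suc t))) (\<lambda>x. (f a x)\<^sup>2)" using fsq[of a] distX[of "Suc t"] by simp
    then show ?thesis by (subst (asm) integrable_distr_eq[OF Xs m])
  qed
  have sqh: "integrable M (\<lambda>\<omega>. (fhat t \<omega> a (X (Suc t) \<omega>))\<^sup>2)" for a t
    using var_fhat[of "Suc t" a] by simp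
  have gint: "integrable M (\<lambda>\<omega>. gg t \<omega> (X (Suc t) \<omega>))" for t
  proof (rule Bochner_Integration.integrable_bound)
    show "integrable M (\<lambda>\<omega>. 4 * ((f True (X (Suc t) \<omega>))\<^sup>2 + (f False (X (Suc t) \<omega>))\<^sup>2
        + (fhat t \<omega> True (X (Suc t) \<omega>))\<^sup>2 + (fhat t \<omega> False (X (Suc t) \<omega>))\<^sup>2) + 2 * \<theta>\<^sup>2)"
      using sqf[of True t] sqf[of False t] sqh[of t True] sqh[of t False] by auto
    show "(\<lambda>\<omega>. gg t \<omega> (X (Suc t) \<omega>)) \<in> borel_measurable M"
      using measurable_compose[OF pmt ggm] by simp
    show "AE \<omega> in M. norm (gg t \<omega> (X (Suc t) \<omega>)) \<le> norm (4 * ((f True (X (Suc t) \<omega>))\<^sup>2 + (f False (X (Suc t) \<omega>))\<^sup>2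
        + (fhat t \<omega> True (X (Suc t) \<omega>))\<^sup>2 + (fhat t \<omega> False (X (Suc t) \<omega>))\<^sup>2) + 2 * \<theta>\<^sup>2)"
    proof (rule AE_I2)
      fix \<omega>
      have "\<bar>gg t \<omega> (X (Suc t) \<omega>)\<bar> \<le> 4 * ((f True (X (Suc t) \<omega>))\<^sup>2 + (f False (X (Suc t) \<omega>))\<^sup>2
        + (fhat t \<omega> True (X (Suc t) \<omega>))\<^sup>2 + (fhat t \<omega> False (X (Suc t) \<omega>))\<^sup>2) + 2 * \<theta>\<^sup>2"
        unfolding gg_def by (rule crude_bound)
      then show "norm (gg t \<omega> (X (Suc t) \<omega>)) \<le> norm (4 * ((f True (X (Suc t) \<omega>))\<^sup>2 + (f False (X (Suc t) \<omega>))\<^sup>2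
        + (fhat t \<omega> True (X (Suc t) \<omega>))\<^sup>2 + (fhat t \<omega> False (X (Suc t) \<omega>))\<^sup>2) + 2 * \<theta>\<^sup>2)"
        unfolding real_norm_def by (rule order.trans[OF _ abs_ge_self])
    qed
  qed
  have AEt: "AE \<omega> in M. CE t \<omega> = (\<integral>x. gg t \<omega> x \<partial>PX) \<and> integrable PX (\<lambda>x. (fhat t \<omega> True x)\<^sup>2)
      \<and> integrable PX (\<lambda>x. (fhat t \<omega> False x)\<^sup>2)" for t
  proof -
    have a1: "AE \<omega> in M. CE t \<omega> = (\<integral>x. gg t \<omega> x \<partial>PX)"
      using freeze(1)[OF Hsub[of t] Xs[of t] indt[of t] ggm[of t] gint[of t]] distX[of "Suc t"] unfolding CE_def by simp
    have a2: "AE \<omega> in M. integrable PX (\<lambda>x. (fhat t \<omega> a x)\<^sup>2)" for a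
      using freeze(2)[where g = "\<lambda>\<omega> x. (fhat t \<omega> a x)\<^sup>2", OF Hsub[of t] Xs[of t] indt[of t] fhsqm[of t a] sqh[of t a]] distX[of "Suc t"] by simp
    show ?thesis using a1 a2[of True] a2[of False] by eventually_elim simp
  qed
  have ptbound: "\<bar>CE t \<omega>\<bar> \<le> (2 + 1 / s) * ((\<integral>x. (fhat t \<omega> True x - f True x)\<^sup>2 \<partial>PX)
      + (\<integral>x. (fhat t \<omega> False x - f False x)\<^sup>2 \<partial>PX)) + s / 2 * (\<integral>x. (f True x - f False x - \<theta>)\<^sup>2 \<partial>PX)"
    if \<omega>: "\<omega> \<in> space M" and ce: "CE t \<omega> = (\<integral>x. gg t \<omega> x \<partial>PX)"
      and i1: "integrable PX (\<lambda>x. (fhat t \<omega> True x)\<^sup>2)" and i0: "integrable PX (\<lambda>x. (fhat t \<omega> False x)\<^sup>2)"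
      and s: "0 < s" for t \<omega> s
  proof -
    have hm: "(\<lambda>x. fhat t \<omega> a x) \<in> borel_measurable PX" for a
    proof -
      have "\<omega> \<in> space (hist M MX X A Y0 Y1 t)" using \<omega> Hsub[of t] by (simp add: H_def subalgebra_def)
      from measurable_Pair2[OF fhat_meas[of t a] this] show ?thesis by (simp add: PX_def)
    qed
    have fm: "f a \<in> borel_measurable PX" for a using f_meas[of a] by (simp add: PX_def)
    show ?thesis
      using G_bound[OF PXp.finite_measure_axioms fm[of True] fm[of False] hm[of True] hm[of False]
          fsq[of True] fsq[of False] i1 i0 s, of \<theta>] ce
      by (simp add: gg_def)
  qed
  have main: "conv_in_prob M (\<lambda>t \<omega>. 2 * CE t \<omega>)"
    unfolding conv_in_prob_def
  proof (intro conjI allI impI)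
    fix t show "(\<lambda>\<omega>. 2 * CE t \<omega>) \<in> borel_measurable M" unfolding CE_def by measurable
  next
    fix e :: real assume e: "0 < e"
    define Cc where "Cc = (\<integral>x. (f True x - f False x - \<theta>)\<^sup>2 \<partial>PX)"
    have Cc: "0 \<le> Cc" unfolding Cc_def by simp
    define s where "s = e / (4 * (Cc + 1))"
    have s: "0 < s" unfolding s_def using e Cc by simp
    define \<delta> where "\<delta> = e / (8 * (2 + 1 / s))"
    have \<delta>: "0 < \<delta>" unfolding \<delta>_def using e s by (simp add: add_pos_pos)
    define R where "R a n \<omega> = k (Suc n) * l2norm PX (\<lambda>x. fhat (Suc n) \<omega> a x - f a x)" for a n \<omega>
    have Rconv: "conv_in_prob M (R a)" for a
      using fhat_rate[of a] unfolding R_def PX_def by simp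
    have Sm: "{\<omega> \<in> space M. sqrt \<delta> < \<bar>R a n \<omega>\<bar>} \<in> sets M" for a n
    proof -
      have [measurable]: "R a n \<in> borel_measurable M" using Rconv[of a] unfolding conv_in_prob_def by simp
      show ?thesis by measurable
    qed
    have lim1: "(\<lambda>n. measure M {\<omega> \<in> space M. sqrt \<delta> < \<bar>R a n \<omega>\<bar>}) \<longlonglongrightarrow> 0" for a
      using Rconv[of a] \<delta> unfolding conv_in_prob_def by simp
    have Ibound: "(\<integral>x. (fhat (Suc n) \<omega> a x - f a x)\<^sup>2 \<partial>PX) \<le> \<delta>"
      if "\<not> sqrt \<delta> < \<bar>R a n \<omega>\<bar>" for a n \<omega>
    proof -
      define L where "L = l2norm PX (\<lambda>x. fhat (Suc n) \<omega> a x - f a x)"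
      have L0: "0 \<le> L" unfolding L_def l2norm_def by simp
      have k2: "2 \<le> k (Suc n)" by (rule k_ge) simp
      have "L \<le> k (Suc n) * L" using L0 k2 by (simp add: mult_le_cancel_right1 order.trans[OF _ k2])
      then have "L \<le> \<bar>R a n \<omega>\<bar>" unfolding R_def L_def[symmetric] by simp
      then have "L \<le> sqrt \<delta>" using that by simp
      then show ?thesis unfolding L_def l2norm_def by simp
    qed
    have bound: "measure M {\<omega> \<in> space M. e < \<bar>2 * CE (Suc n) \<omega>\<bar>}
        \<le> measure M {\<omega> \<in> space M. sqrt \<delta> < \<bar>R True n \<omega>\<bar>} + measure M {\<omega> \<in> space M. sqrt \<delta> < \<bar>R False n \<omega>\<bar>}" for n
    proof -
      from AEt[of "Suc n"] obtain N
        where NP: "{\<omega> \<in> space M. \<not> (CE (Suc n) \<omega> = (\<integral>x. gg (Suc n) \<omega> x \<partial>PX) \<and> integrable PX (\<lambda>x. (fhat (Suc n) \<omega> True x)\<^sup>2)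
            \<and> integrable PX (\<lambda>x. (fhat (Suc n) \<omega> False x)\<^sup>2))} \<subseteq> N"
        and Ne: "emeasure M N = 0" and N: "N \<in> sets M"
        by (rule AE_E)
      let ?S1 = "{\<omega> \<in> space M. sqrt \<delta> < \<bar>R True n \<omega>\<bar>}" and ?S0 = "{\<omega> \<in> space M. sqrt \<delta> < \<bar>R False n \<omega>\<bar>}"
      have sub: "{\<omega> \<in> space M. e < \<bar>2 * CE (Suc n) \<omega>\<bar>} \<subseteq> N \<union> (?S1 \<union> ?S0)"
      proof
        fix \<omega> assume w: "\<omega> \<in> {\<omega> \<in> space M. e < \<bar>2 * CE (Suc n) \<omega>\<bar>}"
        show "\<omega> \<in> N \<union> (?S1 \<union> ?S0)"
        proof (rule ccontr)
          assume nw: "\<omega> \<notin> N \<union> (?S1 \<union> ?S0)"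
          then have P: "CE (Suc n) \<omega> = (\<integral>x. gg (Suc n) \<omega> x \<partial>PX)" "integrable PX (\<lambda>x. (fhat (Suc n) \<omega> True x)\<^sup>2)"
            "integrable PX (\<lambda>x. (fhat (Suc n) \<omega> False x)\<^sup>2)" using NP w by auto
          have pb: "\<bar>CE (Suc n) \<omega>\<bar> \<le> (2 + 1 / s) * ((\<integral>x. (fhat (Suc n) \<omega> True x - f True x)\<^sup>2 \<partial>PX)
             + (\<integral>x. (fhat (Suc n) \<omega> False x - f False x)\<^sup>2 \<partial>PX)) + s / 2 * Cc"
            unfolding Cc_def by (rule ptbound[OF _ P s]) (use w in simp)
          have I1: "(\<integral>x. (fhat (Suc n) \<omega> True x - f True x)\<^sup>2 \<partial>PX) \<le> \<delta>"
            by (rule Ibound) (use nw w in auto)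
          have I0: "(\<integral>x. (fhat (Suc n) \<omega> False x - f False x)\<^sup>2 \<partial>PX) \<le> \<delta>"
            by (rule Ibound) (use nw w in auto)
          have "\<bar>2 * CE (Suc n) \<omega>\<bar> < e"
            by (rule eps_arith[OF e Cc pb I1 I0 s_def \<delta>_def])
          then show False using w by simp
        qed
      qed
      have NS: "N \<union> (?S1 \<union> ?S0) \<in> sets M" using N Sm by auto
      have "measure M {\<omega> \<in> space M. e < \<bar>2 * CE (Suc n) \<omega>\<bar>} \<le> measure M (N \<union> (?S1 \<union> ?S0))"
        by (rule finite_measure_mono[OF sub NS])
      also have "\<dots> \<le> measure M N + measure M (?S1 \<union> ?S0)"
        by (rule measure_Un_le) (use N Sm in auto)
      also have "\<dots> \<le> measure M N + (measure M ?S1 + measure M ?S0)"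
        by (intro add_left_mono measure_Un_le Sm)
      also have "measure M N = 0" using Ne by (simp add: measure_def)
      finally show ?thesis by simp
    qed
    have "(\<lambda>n. measure M {\<omega> \<in> space M. e < \<bar>2 * CE (Suc n) \<omega>\<bar>}) \<longlonglongrightarrow> 0"
      by (rule tendsto_sandwich[OF _ _ tendsto_const tendsto_add_zero[OF lim1 lim1]])
         (auto intro: always_eventually bound)
    then show "(\<lambda>t. measure M {\<omega> \<in> space M. e < \<bar>2 * CE t \<omega>\<bar>}) \<longlonglongrightarrow> 0"
      by (rule LIMSEQ_imp_Suc)
  qed
  then show ?thesis
    by (simp add: CE_def H_def gg_def \<theta>_def)
qed


end
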